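(* For every partition $\mu$ (viewed as a weak composition of length $n$ by appending zeros), $\mathrm{PR}1(\mu)=\mathrm{PR}2(\mathrm{inc}(\mu))$, where \[ \mathrm{PR}1(\mu)=\prod_{s\in\mathrm{dg}(\mu)}(1-q^{\mathrm{leg}(s)}t^{\mathrm{arm}(s)+1}),\qquad \mathrm{PR}2(\alpha)=\prod_{i\ge1}(t;t)_{m_i}\prod_{\substack{s\in\mathrm{dg}(\mathrm{inc}(\alpha))\\ s\text{ not in row }1}}(1-q^{\mathrm{leg}(s)+1}t^{\mathrm{arm}(s)+1}), \] $m_i$ is the number of parts of $\alpha$ equal to $i$, and $(t;t)_k=(1-t)(1-t^2)\cdots(1-t^k)$.
   Context: For a weak composition $\alpha=(\alpha_1,\dots,\alpha_n)$ (nonnegative integers), $\mathrm{dg}(\alpha)$ is the set of cells $(i,r)$, $1\le i\le n$, $1\le r\le\alpha_i$ (column $i$ from the left has $\alpha_i$ cells; rows counted from the bottom). $\mathrm{leg}(i,r)=\alpha_i-r$. $\mathrm{arm}(i,r)$ is the number of cells $(j,r)\in\mathrm{dg}(\alpha)$ with $j>i$ and $\alpha_j\le\alpha_i$, plus the number of cells $(j,r-1)\in\mathrm{dg}(\alpha)$ with $j<i$ and $\alpha_j<\alpha_i$. $\mathrm{inc}(\alpha)$ is the rearrangement of $\alpha$ into weakly increasing order. *)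

theory Defs
  imports Main
begin

text \<open>A weak composition is a list of naturals; column i (0-indexed here, i.e. column i+1
  of the paper) has height alpha!i. Cells are pairs (i, r) with r the row, counted from 1.\<close>

definition dg :: "nat list \<Rightarrow> (nat \<times> nat) set" where
  "dg \<alpha> = {(i, r). i < length \<alpha> \<and> 1 \<le> r \<and> r \<le> \<alpha> ! i}"

definition leg :: "nat list \<Rightarrow> nat \<times> nat \<Rightarrow> nat" where
  "leg \<alpha> s = \<alpha> ! fst s - snd s"

definition arm :: "nat list \<Rightarrow> nat \<times> nat \<Rightarrow> nat" where
  "arm \<alpha> s = (case s of (i, r) \<Rightarrow>
      card {j. (j, r) \<in> dg \<alpha> \<and> i < j \<and> \<alpha> ! j \<le> \<alpha> ! i}
    + card {j. r \<ge> 1 \<and> (j, r - 1) \<in> dg \<alpha> \<and> j < i \<and> \<alpha> ! j < \<alpha> ! i})"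

definition inc :: "nat list \<Rightarrow> nat list" where
  "inc \<alpha> = sort \<alpha>"

definition tpoch :: "'a::comm_ring_1 \<Rightarrow> nat \<Rightarrow> 'a" where
  "tpoch t k = (\<Prod>j = 1..k. 1 - t ^ j)"

definition PR1 :: "'a::comm_ring_1 \<Rightarrow> 'a \<Rightarrow> nat list \<Rightarrow> 'a" where
  "PR1 q t \<mu> = (\<Prod>s\<in>dg \<mu>. 1 - q ^ leg \<mu> s * t ^ (arm \<mu> s + 1))"

definition PR2 :: "'a::comm_ring_1 \<Rightarrow> 'a \<Rightarrow> nat list \<Rightarrow> 'a" where
  "PR2 q t \<alpha> =
     (\<Prod>i\<in>{i. 1 \<le> i \<and> i \<in> set \<alpha>}. tpoch t (count_list \<alpha> i))
   * (\<Prod>s\<in>{s \<in> dg (inc \<alpha>). snd s \<noteq> 1}.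
        1 - q ^ (leg (inc \<alpha>) s + 1) * t ^ (arm (inc \<alpha>) s + 1))"

end

theory Submission
  imports Defs "HOL-Library.Multiset"
begin

definition Nc :: "nat list \<Rightarrow> nat \<Rightarrow> nat \<Rightarrow> nat" where
  "Nc xs r h = length (filter (\<lambda>x. r \<le> x \<and> x < h) xs)"

definition Dc :: "nat list \<Rightarrow> nat \<Rightarrow> nat" where
  "Dc xs i = card {j. i < j \<and> j < length xs \<and> xs ! j = xs ! i}"

lemma Nc_card: "card {j. j < length xs \<and> r \<le> xs ! j \<and> xs ! j < h} = Nc xs r h"
  unfolding Nc_def by (simp add: length_filter_conv_card)

lemma filter_len_mset: "mset xs = mset ys \<Longrightarrow> length (filter P xs) = length (filter P ys)"
  by (metis mset_filter size_mset)

lemma Nc_perm: "mset xs = mset ys \<Longrightarrow> Nc xs = Nc ys"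
  unfolding Nc_def by (intro ext filter_len_mset)

lemma count_perm: "mset xs = mset ys \<Longrightarrow> count_list xs h = count_list ys h"
  unfolding count_list_eq_length_filter by (rule filter_len_mset)

lemma dg_Sigma: "dg \<alpha> = (SIGMA i:{..<length \<alpha>}. {1..\<alpha>!i})"
  unfolding dg_def by auto

lemma Dc_Cons: "i < length xs \<Longrightarrow> Dc (a # xs) (Suc i) = Dc xs i"
proof -
  assume "i < length xs"
  have "{j. Suc i < j \<and> j < length (a#xs) \<and> (a#xs) ! j = (a#xs) ! Suc i}
        = Suc ` {j. i < j \<and> j < length xs \<and> xs ! j = xs ! i}"
    by (auto simp: image_iff gr0_conv_Suc less_Suc_eq_0_disj)
  then show ?thesis unfolding Dc_def by (simp add: card_image)
qed

lemma Dc_0: "Dc (a # xs) 0 = count_list xs a"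
proof -
  have "{j. 0 < j \<and> j < length (a#xs) \<and> (a#xs) ! j = (a#xs) ! 0}
        = Suc ` {j. j < length xs \<and> xs ! j = a}"
    by (auto simp: image_iff gr0_conv_Suc)
  then have "Dc (a # xs) 0 = card {j. j < length xs \<and> xs ! j = a}"
    unfolding Dc_def by (simp add: card_image)
  also have "\<dots> = count_list xs a"
    unfolding count_list_eq_length_filter length_filter_conv_card by metis
  finally show ?thesis .
qed

lemma L:
  fixes g :: "nat \<Rightarrow> nat \<Rightarrow> 'a::comm_monoid_mult"
  assumes "finite S" "set xs \<subseteq> S"
  shows "(\<Prod>i<length xs. g (xs!i) (Dc xs i)) = (\<Prod>h\<in>S. \<Prod>d<count_list xs h. g h d)"
  using assms(2)
proof (induction xs)
  case Nil
  then show ?case by simp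
next
  case (Cons a xs)
  have aS: "a \<in> S" using Cons.prems by auto
  have "(\<Prod>i<length (a#xs). g ((a#xs)!i) (Dc (a#xs) i))
      = g a (count_list xs a) * (\<Prod>i<length xs. g (xs!i) (Dc xs i))"
    by (simp add: prod.lessThan_Suc_shift Dc_0 Dc_Cons del: prod.lessThan_Suc)
  also have "\<dots> = g a (count_list xs a) * (\<Prod>h\<in>S. \<Prod>d<count_list xs h. g h d)"
    using Cons by auto
  also have "\<dots> = (\<Prod>h\<in>S. (if h = a then g a (count_list xs a) else 1) * (\<Prod>d<count_list xs h. g h d))"
    by (simp add: prod.distrib assms(1) aS)
  also have "\<dots> = (\<Prod>h\<in>S. \<Prod>d<count_list (a#xs) h. g h d)"
    by (rule prod.cong) (auto simp: mult.commute)
  finally show ?case .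
qed

lemma arm_dec:
  assumes s: "sorted_wrt (\<ge>) \<mu>" and i: "i < length \<mu>" and r: "1 \<le> r" "r \<le> \<mu>!i"
  shows "arm \<mu> (i, r) = Dc \<mu> i + Nc \<mu> r (\<mu>!i)"
proof -
  have mono: "\<And>a b. a < b \<Longrightarrow> b < length \<mu> \<Longrightarrow> \<mu>!b \<le> \<mu>!a"
    using s sorted_wrt_nth_less by fastforce
  have monoe: "\<And>a b. a \<le> b \<Longrightarrow> b < length \<mu> \<Longrightarrow> \<mu>!b \<le> \<mu>!a"
    using mono by (metis order.refl le_neq_implies_less)
  have A: "{j. (j, r) \<in> dg \<mu> \<and> i < j \<and> \<mu> ! j \<le> \<mu> ! i}
      = {j. i < j \<and> j < length \<mu> \<and> \<mu> ! j = \<mu> ! i}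
        \<union> {j. j < length \<mu> \<and> r \<le> \<mu> ! j \<and> \<mu> ! j < \<mu> ! i}"
    using r mono monoe i by (auto simp: dg_def) (metis le_less_trans less_le not_le)+
  have B: "{j. r \<ge> 1 \<and> (j, r - 1) \<in> dg \<mu> \<and> j < i \<and> \<mu> ! j < \<mu> ! i} = {}"
    using mono i by (auto simp: dg_def) (meson less_trans not_le)
  have "card ({j. i < j \<and> j < length \<mu> \<and> \<mu> ! j = \<mu> ! i}
        \<union> {j. j < length \<mu> \<and> r \<le> \<mu> ! j \<and> \<mu> ! j < \<mu> ! i})
     = Dc \<mu> i + Nc \<mu> r (\<mu>!i)"
    unfolding Dc_def Nc_card[symmetric] by (rule card_Un_disjoint) auto
  then show ?thesis unfolding arm_def using A B by simp
qed

lemma arm_inc: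
  assumes s: "sorted b" and i: "i < length b" and r: "2 \<le> r" "r \<le> b!i"
  shows "arm b (i, r) = Dc b i + Nc b (r - 1) (b!i)"
proof -
  have mono: "\<And>a c. a \<le> c \<Longrightarrow> c < length b \<Longrightarrow> b!a \<le> b!c"
    using s by (simp add: sorted_nth_mono)
  have A: "{j. (j, r) \<in> dg b \<and> i < j \<and> b ! j \<le> b ! i}
      = {j. i < j \<and> j < length b \<and> b ! j = b ! i}"
    using r mono i by (auto simp: dg_def) (metis le_antisym less_imp_le)
  have B: "{j. r \<ge> 1 \<and> (j, r - 1) \<in> dg b \<and> j < i \<and> b ! j < b ! i}
     = {j. j < length b \<and> r - 1 \<le> b ! j \<and> b ! j < b ! i}"
    using r mono i by (auto simp: dg_def) (meson leI order.strict_iff_not)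
  have "arm b (i, r) = card {j. (j, r) \<in> dg b \<and> i < j \<and> b ! j \<le> b ! i}
     + card {j. r \<ge> 1 \<and> (j, r - 1) \<in> dg b \<and> j < i \<and> b ! j < b ! i}"
    unfolding arm_def by simp
  then show ?thesis unfolding A B Dc_def Nc_card by simp
qed

theorem mainTheorem10:
  fixes q t :: "'a::comm_ring_1" and \<mu> :: "nat list"
  assumes "sorted_wrt (\<ge>) \<mu>"
  shows "PR1 q t \<mu> = PR2 q t (inc \<mu>)"
proof -
  define b where "b = sort \<mu>"
  define n where "n = length \<mu>"
  have bsort: "sorted b" and lb: "length b = n" and mb: "mset b = mset \<mu>"
    unfolding b_def n_def by auto
  have sb: "set b = set \<mu>" by (metis mb set_mset_mset)
  have incb: "inc (inc \<mu>) = b" unfolding inc_def b_def by (simp add: sorted_sort_id)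
  have Nb: "Nc b = Nc \<mu>" by (rule Nc_perm[OF mb])
  have cb: "\<And>h. count_list b h = count_list \<mu> h" by (rule count_perm[OF mb])
  define G where "G h d = (\<Prod>r\<in>{1..<h}. 1 - q ^ (h - r) * t ^ (d + Nc \<mu> r h + 1))" for h d
  define H where "H h d = (if 1 \<le> h then 1 - t ^ (d + 1) else (1::'a))" for h d :: nat
  have FHG: "(\<Prod>r\<in>{1..h}. 1 - q ^ (h - r) * t ^ (d + Nc \<mu> r h + 1)) = H h d * G h d" for h d
  proof (cases "h = 0")
    case True then show ?thesis by (simp add: H_def G_def)
  next
    case False
    then have "{1..h} = insert h {1..<h}" by auto
    moreover have "Nc \<mu> h h = 0" unfolding Nc_def by (simp add: filter_False)
    ultimately show ?thesis using False by (simp add: H_def G_def)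
  qed
  have P1: "PR1 q t \<mu> = (\<Prod>i<n. H (\<mu>!i) (Dc \<mu> i) * G (\<mu>!i) (Dc \<mu> i))"
  proof -
    have "PR1 q t \<mu> = (\<Prod>i<n. \<Prod>r\<in>{1..\<mu>!i}. 1 - q ^ leg \<mu> (i, r) * t ^ (arm \<mu> (i, r) + 1))"
      unfolding PR1_def dg_Sigma n_def by (simp add: prod.Sigma)
    also have "\<dots> = (\<Prod>i<n. \<Prod>r\<in>{1..\<mu>!i}. 1 - q ^ (\<mu>!i - r) * t ^ (Dc \<mu> i + Nc \<mu> r (\<mu>!i) + 1))"
      by (intro prod.cong refl) (simp add: leg_def arm_dec[OF assms] n_def)
    also have "\<dots> = (\<Prod>i<n. H (\<mu>!i) (Dc \<mu> i) * G (\<mu>!i) (Dc \<mu> i))"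
      by (intro prod.cong refl FHG)
    finally show ?thesis .
  qed
  have P2b: "(\<Prod>s\<in>{s \<in> dg b. snd s \<noteq> 1}. 1 - q ^ (leg b s + 1) * t ^ (arm b s + 1))
      = (\<Prod>i<n. G (b!i) (Dc b i))"
  proof -
    have "{s \<in> dg b. snd s \<noteq> 1} = (SIGMA i:{..<n}. {2..b!i})"
      unfolding dg_def lb[symmetric] by auto
    then have "(\<Prod>s\<in>{s \<in> dg b. snd s \<noteq> 1}. 1 - q ^ (leg b s + 1) * t ^ (arm b s + 1))
      = (\<Prod>i<n. \<Prod>r\<in>{2..b!i}. 1 - q ^ (leg b (i,r) + 1) * t ^ (arm b (i,r) + 1))"
      by (simp add: prod.Sigma)
    also have "\<dots> = (\<Prod>i<n. \<Prod>r\<in>{2..b!i}. 1 - q ^ (b!i - (r - 1)) * t ^ (Dc b i + Nc \<mu> (r - 1) (b!i) + 1))"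
      by (intro prod.cong refl) (auto simp: leg_def arm_inc[OF bsort] lb Nb Suc_diff_le)
    also have "\<dots> = (\<Prod>i<n. G (b!i) (Dc b i))"
    proof (intro prod.cong refl)
      fix i
      have e: "{2..b!i} = Suc ` {1..<b!i}" by auto
      show "(\<Prod>r\<in>{2..b!i}. 1 - q ^ (b!i - (r - 1)) * t ^ (Dc b i + Nc \<mu> (r - 1) (b!i) + 1))
          = G (b!i) (Dc b i)"
        unfolding G_def by (rule prod.reindex_cong[where l=Suc, OF _ e]) (simp_all add: Suc_diff_le)
    qed
    finally show ?thesis .
  qed
  have GL: "(\<Prod>i<n. G (b!i) (Dc b i)) = (\<Prod>i<n. G (\<mu>!i) (Dc \<mu> i))"
  proof -
    have "(\<Prod>i<n. G (b!i) (Dc b i)) = (\<Prod>h\<in>set \<mu>. \<Prod>d<count_list b h. G h d)"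
      using L[of "set \<mu>" b G] lb sb by simp
    also have "\<dots> = (\<Prod>h\<in>set \<mu>. \<Prod>d<count_list \<mu> h. G h d)"
      by (simp only: cb)
    also have "\<dots> = (\<Prod>i<n. G (\<mu>!i) (Dc \<mu> i))"
      using L[of "set \<mu>" \<mu> G] unfolding n_def by simp
    finally show ?thesis .
  qed
  have tp: "tpoch t k = (\<Prod>d<k. 1 - t ^ (d + 1))" for k
  proof -
    have e: "{1..k} = Suc ` {..<k}" by (simp add: image_Suc_lessThan)
    show ?thesis unfolding tpoch_def by (rule prod.reindex_cong[where l=Suc, OF _ e]) simp_all
  qed
  have HL: "(\<Prod>i<n. H (\<mu>!i) (Dc \<mu> i)) = (\<Prod>i\<in>{i. 1 \<le> i \<and> i \<in> set b}. tpoch t (count_list b i))"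
  proof -
    have "(\<Prod>i<n. H (\<mu>!i) (Dc \<mu> i)) = (\<Prod>h\<in>set \<mu>. \<Prod>d<count_list \<mu> h. H h d)"
      using L[of "set \<mu>" \<mu> H] by (simp add: n_def)
    also have "\<dots> = (\<Prod>h\<in>set \<mu>. if 1 \<le> h then tpoch t (count_list b h) else 1)"
      by (intro prod.cong refl) (simp add: H_def tp cb)
    also have "\<dots> = (\<Prod>h\<in>{h \<in> set \<mu>. 1 \<le> h}. tpoch t (count_list b h))"
      by (simp add: prod.inter_filter)
    finally show ?thesis using sb by (simp add: conj_commute)
  qed
  have "PR2 q t (inc \<mu>) = (\<Prod>i\<in>{i. 1 \<le> i \<and> i \<in> set b}. tpoch t (count_list b i)) * (\<Prod>i<n. G (b!i) (Dc b i))"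
  proof -
    have sb2: "set (inc \<mu>) = set b" and cb2: "count_list (inc \<mu>) = count_list b"
      unfolding b_def inc_def by auto
    show ?thesis unfolding PR2_def incb sb2 cb2 P2b ..
  qed
  also have "\<dots> = PR1 q t \<mu>" using P1 GL HL by (simp add: prod.distrib)
  finally show ?thesis ..
qed

end
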